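(* Let $k\ge 2$ and $n>k$ be integers, and let $1\le h\le k$. Let $T$ be an affine equivariant location estimator on $\mathbf{R}^k$ (for data sets of size $n$) satisfying Condition $(C_h)$. Let $X=\{x_1,\dots,x_n\}\subset\mathbf{R}^k$ be a data set in general position. Then $$\mathrm{fsbv}(T,X)\le \frac{\lfloor (n-h+1)/2\rfloor}{n}.$$
   Context: A data set $X=\{x_1,\dots,x_n\}\subset\mathbf{R}^k$ is in general position if no more than $k$ of its points lie on any affine hyperplane of $\mathbf{R}^k$. A location estimator $T$ assigns to every data set of $n$ points (possibly with repetitions) in $\mathbf{R}^k$ a point $T(X)\in\mathbf{R}^k$. It is affine equivariant if $T(\{Ax_1+b,\dots,Ax_n+b\})=AT(\{x_1,\dots,x_n\})+b$ for every nonsingular $k\times k$ matrix $A$ and every $b\in\mathbf{R}^k$. Finite-sample (replacement) breakdown value: for $1\le m\le n$, let $\mathcal{X}_m$ be the collection of all data sets $X'$ obtained from $X$ by replacing some $m$ of the points of $X$ by $m$ arbitrary points of $\mathbf{R}^k$. Then $\mathrm{fsbv}(T,X)=\min\{m/n : \sup_{X'\in\mathcal{X}_m}\|T(X')-T(X)\|=\infty\}$, i.e. the smallest fraction of replaced points that can make $T$ take values arbitrarily far away. Condition $(C_h)$ (for a fixed integer $h$ with $1\le h\le k$): for every data set $X=\{x_1,\dots,x_n\}\subset\mathbf{R}^k$ in general position and every direction $u\in\mathbf{R}^k$ such that the inner products $y_i=u'x_i$ satisfy, after renumbering, $y_1=\dots=y_h<y_{h+1}\le\dots\le y_n$, there exists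 $\alpha>0$, depending only on $k$ and on $y_1,\dots,y_n$, such that $u'T(X)\ge y_h+\alpha$. *)

theory Defs
  imports "HOL-Analysis.Analysis" "HOL-Library.Multiset"
begin

text \<open>Data sets are finite multisets of points of R^k (repetitions allowed);
  the dimension k is CARD('k).\<close>

definition general_position :: "(real^'k) multiset \<Rightarrow> bool" where
  "general_position X \<longleftrightarrow>
     (\<forall>u c. u \<noteq> 0 \<longrightarrow> size (filter_mset (\<lambda>x. u \<bullet> x = c) X) \<le> CARD('k))"

definition affine_equivariant :: "nat \<Rightarrow> ((real^'k) multiset \<Rightarrow> real^'k) \<Rightarrow> bool" where
  "affine_equivariant n T \<longleftrightarrow>
     (\<forall>X (A::real^'k^'k) b. size X = n \<longrightarrow> invertible A \<longrightarrow>
        T (image_mset (\<lambda>x. A *v x + b) X) = A *v T X + b)"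

text \<open>Condition (C_h): alpha depends only on (k and) the projected values y_1..y_n,
  encoded as a function of the multiset of these values.\<close>
definition condition_C :: "nat \<Rightarrow> nat \<Rightarrow> ((real^'k) multiset \<Rightarrow> real^'k) \<Rightarrow> bool" where
  "condition_C n h T \<longleftrightarrow>
     (\<exists>\<alpha> :: real multiset \<Rightarrow> real. (\<forall>Y. \<alpha> Y > 0) \<and>
        (\<forall>X u c. size X = n \<longrightarrow> general_position X \<longrightarrow>
           (\<forall>x\<in>#X. c \<le> u \<bullet> x) \<longrightarrow> size (filter_mset (\<lambda>x. u \<bullet> x = c) X) = h \<longrightarrow>
           u \<bullet> T X \<ge> c + \<alpha> (image_mset (\<lambda>x. u \<bullet> x) X)))"

definition replacements :: "'a multiset \<Rightarrow> nat \<Rightarrow> 'a multiset set" where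
  "replacements X m = {X - Y + Z | Y Z. Y \<subseteq># X \<and> size Y = m \<and> size Z = m}"

definition breaks_down :: "((real^'k) multiset \<Rightarrow> real^'k) \<Rightarrow> (real^'k) multiset \<Rightarrow> nat \<Rightarrow> bool" where
  "breaks_down T X m \<longleftrightarrow> (\<forall>B::real. \<exists>X'\<in>replacements X m. norm (T X' - T X) > B)"

definition fsbv :: "((real^'k) multiset \<Rightarrow> real^'k) \<Rightarrow> (real^'k) multiset \<Rightarrow> real" where
  "fsbv T X = Min {real m / real (size X) | m. 1 \<le> m \<and> m \<le> size X \<and> breaks_down T X m}"

end

theory Submission
  imports Defs
begin


definition gpI :: "nat \<Rightarrow> (nat \<Rightarrow> real^'k) \<Rightarrow> bool" where
  "gpI n x \<longleftrightarrow> (\<forall>u c. u \<noteq> 0 \<longrightarrow> card {i. i < n \<and> u \<bullet> x i = c} \<le> CARD('k))"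

lemma hyper_exists:
  fixes E :: "(real^'k) set"
  assumes "finite E" "card E < CARD('k)"
  obtains v where "v \<noteq> 0" "\<And>e. e \<in> E \<Longrightarrow> v \<bullet> e = 0"
proof -
  have "dim E \<le> card E" by (rule dim_le_card[OF span_superset assms(1)])
  then have "dim E < DIM(real^'k)" using assms by simp
  then obtain v where "v \<noteq> 0" "\<And>y. y \<in> span E \<Longrightarrow> orthogonal v y"
    using orthogonal_to_subspace_exists[OF \<open>dim E < DIM(real^'k)\<close>] by blast
  then show ?thesis using that span_base unfolding orthogonal_def by blast
qed

lemma card_Z_le:
  assumes "gpI n x" "(u::real^'k) \<noteq> 0"
  shows "card {i. i < n \<and> u \<bullet> x i = c} \<le> CARD('k)"
  using assms unfolding gpI_def by blast

lemma drop_pt: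
  fixes x :: "nat \<Rightarrow> real^'k"
  assumes gp: "gpI n x" and nk: "CARD('k) < n" and u0: "u \<noteq> 0"
    and sup: "\<forall>i<n. c \<le> u \<bullet> x i" and Zd: "Z = {i. i < n \<and> u \<bullet> x i = c}"
    and cZ: "2 \<le> card Z" and zZ: "z \<in> Z"
  shows "\<exists>u' c'. u' \<noteq> 0 \<and> (\<forall>i<n. c' \<le> u' \<bullet> x i) \<and> {i. i < n \<and> u' \<bullet> x i = c'} = Z - {z}"
proof -
  have finZ: "finite Z" using Zd by simp
  have cZk: "card Z \<le> CARD('k)" using card_Z_le[OF gp u0] Zd by simp
  have "card (Z - {z}) \<ge> 1" using cZ zZ finZ by simp
  then obtain i0 where i0: "i0 \<in> Z - {z}"
    by (metis card.empty all_not_in_conv not_one_le_zero)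
  have ex_v: "\<exists>v. (\<forall>i\<in>Z-{z}. v \<bullet> x i = v \<bullet> x i0) \<and> v \<bullet> x z \<noteq> v \<bullet> x i0"
  proof (rule ccontr)
    assume H: "\<not> ?thesis"
    have "card ({..<n} - Z) = n - card Z"
      using Zd by (subst card_Diff_subset) auto
    then have "CARD('k) + 1 - card Z \<le> card ({..<n} - Z)" using nk by simp
    then obtain W where W: "W \<subseteq> {..<n} - Z" "card W = CARD('k) + 1 - card Z" "finite W"
      by (rule obtain_subset_with_card_n)
    define E where "E = (\<lambda>i. x i - x i0) ` ((Z - {z, i0}) \<union> W)"
    have "card (Z - {z, i0}) = card Z - 2" using zZ i0 finZ by (subst card_Diff_subset) auto
    then have "card E \<le> card Z - 2 + (CARD('k) + 1 - card Z)"
      unfolding E_def using W finZ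
      by (metis (no_types, lifting) card_Un_le card_image_le finite_Diff finite_UnI le_trans add_le_mono order_refl)
    also have "\<dots> < CARD('k)" using cZ cZk by simp
    finally have "card E < CARD('k)" .
    moreover have "finite E" unfolding E_def using finZ W by simp
    ultimately obtain v where v0: "v \<noteq> 0" and vE: "\<And>e. e \<in> E \<Longrightarrow> v \<bullet> e = 0"
      using hyper_exists by blast
    have vZ: "\<forall>i\<in>Z-{z}. v \<bullet> x i = v \<bullet> x i0"
    proof
      fix i assume "i \<in> Z - {z}"
      show "v \<bullet> x i = v \<bullet> x i0"
      proof (cases "i = i0")
        case False
        then have "x i - x i0 \<in> E" unfolding E_def using \<open>i \<in> Z - {z}\<close> by auto
        then show ?thesis using vE[of "x i - x i0"] by (simp add: inner_diff_right)
      qed simp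
    qed
    then have vz: "v \<bullet> x z = v \<bullet> x i0" using H by blast
    have vW: "\<forall>i\<in>W. v \<bullet> x i = v \<bullet> x i0"
    proof
      fix i assume "i \<in> W"
      then have "x i - x i0 \<in> E" unfolding E_def by auto
      then show "v \<bullet> x i = v \<bullet> x i0" using vE[of "x i - x i0"] by (simp add: inner_diff_right)
    qed
    have sub: "Z \<union> W \<subseteq> {i. i < n \<and> v \<bullet> x i = v \<bullet> x i0}"
      using vZ vz vW W Zd by auto
    have "card (Z \<union> W) = card Z + card W" using W finZ by (subst card_Un_disjoint) auto
    also have "\<dots> = CARD('k) + 1" using W cZk by simp
    moreover have "card (Z \<union> W) \<le> card {i. i < n \<and> v \<bullet> x i = v \<bullet> x i0}"
      by (rule card_mono[OF _ sub]) simp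
    ultimately have "CARD('k) + 1 \<le> card {i. i < n \<and> v \<bullet> x i = v \<bullet> x i0}"
      by simp
    then show False using card_Z_le[OF gp v0, of "v \<bullet> x i0"] by simp
  qed
  then obtain v0 where v0: "\<forall>i\<in>Z-{z}. v0 \<bullet> x i = v0 \<bullet> x i0" "v0 \<bullet> x z \<noteq> v0 \<bullet> x i0" by blast
  define v where "v = (if v0 \<bullet> x z > v0 \<bullet> x i0 then v0 else - v0)"
  define d where "d = v \<bullet> x i0"
  have vZ: "\<forall>i\<in>Z-{z}. v \<bullet> x i = d" using v0 unfolding v_def d_def by auto
  have vz: "v \<bullet> x z > d" using v0 unfolding v_def d_def by auto
  define S where "S = (\<lambda>i. u \<bullet> x i - c) ` {i. i < n \<and> i \<notin> Z}"
  have "card Z < n" using cZk nk by simp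
  have "{i. i < n \<and> i \<notin> Z} \<noteq> {}"
  proof
    assume "{i. i < n \<and> i \<notin> Z} = {}"
    then have "{..<n} \<subseteq> Z" by auto
    then have "n \<le> card Z" using finZ by (metis card_lessThan card_mono)
    then show False using \<open>card Z < n\<close> by simp
  qed
  then have Sne: "S \<noteq> {}" and Sfin: "finite S" unfolding S_def by auto
  define m0 where "m0 = Min S"
  have m0pos: "m0 > 0"
  proof -
    have "m0 \<in> S" unfolding m0_def using Sne Sfin by simp
    then show ?thesis unfolding S_def using sup Zd by force
  qed
  have m0le: "\<And>i. i < n \<Longrightarrow> i \<notin> Z \<Longrightarrow> m0 \<le> u \<bullet> x i - c"
    unfolding m0_def S_def using Sfin by (intro Min_le) auto
  define M where "M = 1 + (\<Sum>i<n. \<bar>v \<bullet> x i - d\<bar>)"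
  have Mbig: "\<And>i. i < n \<Longrightarrow> \<bar>v \<bullet> x i - d\<bar> < M"
  proof -
    fix i assume "i < n"
    have "\<bar>v \<bullet> x i - d\<bar> \<le> (\<Sum>i<n. \<bar>v \<bullet> x i - d\<bar>)"
      using \<open>i < n\<close> by (intro member_le_sum) auto
    then show "\<bar>v \<bullet> x i - d\<bar> < M" unfolding M_def by simp
  qed
  have Mpos: "M > 0" unfolding M_def by (simp add: add_pos_nonneg sum_nonneg)
  define e where "e = m0 / M"
  have epos: "e > 0" unfolding e_def using m0pos Mpos by simp
  define u' where "u' = u + e *\<^sub>R v"
  define c' where "c' = c + e * d"
  have key: "\<And>i. u' \<bullet> x i - c' = (u \<bullet> x i - c) + e * (v \<bullet> x i - d)"
    unfolding u'_def c'_def by (simp add: inner_add_left algebra_simps)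
  have outside: "\<And>i. i < n \<Longrightarrow> i \<notin> Z \<Longrightarrow> u' \<bullet> x i - c' > 0"
  proof -
    fix i assume i: "i < n" "i \<notin> Z"
    have "e * \<bar>v \<bullet> x i - d\<bar> < e * M" using Mbig[OF i(1)] epos by simp
    also have "\<dots> = m0" unfolding e_def using Mpos by simp
    finally have "\<bar>e * (v \<bullet> x i - d)\<bar> < m0" using epos by (simp add: abs_mult)
    then show "u' \<bullet> x i - c' > 0" using key[of i] m0le[OF i] by linarith
  qed
  have inZ: "\<And>i. i \<in> Z - {z} \<Longrightarrow> u' \<bullet> x i - c' = 0"
    using key vZ Zd by auto
  have atz: "u' \<bullet> x z - c' > 0" using key[of z] vz zZ Zd epos by simp
  have u'0: "u' \<noteq> 0"
  proof
    assume "u' = 0"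
    then show False using inZ[OF i0] atz by simp
  qed
  have "\<forall>i<n. c' \<le> u' \<bullet> x i"
  proof (intro allI impI)
    fix i assume "i < n"
    show "c' \<le> u' \<bullet> x i"
    proof (cases "i \<in> Z")
      case True
      then show ?thesis using inZ atz by (cases "i = z") fastforce+
    next
      case False then show ?thesis using outside \<open>i < n\<close> by fastforce
    qed
  qed
  moreover have "{i. i < n \<and> u' \<bullet> x i = c'} = Z - {z}"
  proof
    show "{i. i < n \<and> u' \<bullet> x i = c'} \<subseteq> Z - {z}"
      using outside atz by fastforce
    show "Z - {z} \<subseteq> {i. i < n \<and> u' \<bullet> x i = c'}"
      using inZ Zd by fastforce
  qed
  ultimately show ?thesis using u'0 by blast
qed

lemma raise_pt:
  fixes x :: "nat \<Rightarrow> real^'k"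
  assumes gp: "gpI n x" and nk: "CARD('k) < n" and u0: "u \<noteq> 0"
    and sup: "\<forall>i<n. c \<le> u \<bullet> x i" and Zd: "Z = {i. i < n \<and> u \<bullet> x i = c}"
    and cZ1: "1 \<le> card Z" and cZk: "card Z < CARD('k)"
  shows "\<exists>u' c'. u' \<noteq> 0 \<and> (\<forall>i<n. c' \<le> u' \<bullet> x i) \<and> card Z < card {i. i < n \<and> u' \<bullet> x i = c'}"
proof -
  have finZ: "finite Z" using Zd by simp
  obtain i0 where i0: "i0 \<in> Z" using cZ1 by (metis card.empty all_not_in_conv not_one_le_zero)
  define E where "E = insert u ((\<lambda>i. x i - x i0) ` (Z - {i0}))"
  have "card ((\<lambda>i. x i - x i0) ` (Z - {i0})) \<le> card Z - 1"
    using card_image_le[of "Z - {i0}" "\<lambda>i. x i - x i0"] finZ i0 by simp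
  moreover have "card E \<le> Suc (card ((\<lambda>i. x i - x i0) ` (Z - {i0})))"
    unfolding E_def using finZ by (simp add: card_insert_if)
  ultimately have "card E \<le> card Z" using cZ1 by linarith
  then have "card E < CARD('k)" using cZ1 cZk by simp
  moreover have "finite E" unfolding E_def using finZ by simp
  ultimately obtain v where v0: "v \<noteq> 0" and vE: "\<And>e. e \<in> E \<Longrightarrow> v \<bullet> e = 0"
    using hyper_exists by blast
  have vu: "v \<bullet> u = 0" using vE unfolding E_def by simp
  have vZ: "\<forall>i\<in>Z. v \<bullet> x i = v \<bullet> x i0"
  proof
    fix i assume "i \<in> Z"
    show "v \<bullet> x i = v \<bullet> x i0"
    proof (cases "i = i0")
      case False
      then have "x i - x i0 \<in> E" unfolding E_def using \<open>i \<in> Z\<close> by auto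
      then show ?thesis using vE[of "x i - x i0"] by (simp add: inner_diff_right)
    qed simp
  qed
  have "\<exists>j<n. v \<bullet> x j \<noteq> v \<bullet> x i0"
  proof (rule ccontr)
    assume "\<not> ?thesis"
    then have "{i. i < n \<and> v \<bullet> x i = v \<bullet> x i0} = {..<n}" by auto
    then show False using card_Z_le[OF gp v0, of "v \<bullet> x i0"] nk by simp
  qed
  then obtain j where j: "j < n" "v \<bullet> x j \<noteq> v \<bullet> x i0" by blast
  define v' where "v' = (if v \<bullet> x j > v \<bullet> x i0 then v else - v)"
  define d where "d = v' \<bullet> x i0"
  have v'Z: "\<forall>i\<in>Z. v' \<bullet> x i = d" using vZ unfolding v'_def d_def by auto
  have v'j: "v' \<bullet> x j > d" using j unfolding v'_def d_def by auto
  have v'u: "u \<bullet> v' = 0" using vu unfolding v'_def by (auto simp: inner_commute)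
  define J where "J = {i. i < n \<and> v' \<bullet> x i > d}"
  have Jfin: "finite J" and Jne: "J \<noteq> {}" using j v'j unfolding J_def by auto
  define r where "r = (\<lambda>i. (u \<bullet> x i - c) / (v' \<bullet> x i - d))"
  define t where "t = Min (r ` J)"
  have "t \<in> r ` J" unfolding t_def using Jfin Jne by simp
  then obtain j0 where j0: "j0 \<in> J" "t = r j0" by blast
  have tle: "\<And>i. i \<in> J \<Longrightarrow> t \<le> r i" unfolding t_def using Jfin by simp
  have JZ: "\<And>i. i \<in> J \<Longrightarrow> i \<notin> Z" using v'Z unfolding J_def by auto
  have j0pos: "u \<bullet> x j0 - c > 0" using JZ[OF j0(1)] j0(1) sup Zd unfolding J_def by force
  have tpos: "t > 0" using j0 j0pos unfolding r_def J_def by simp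
  define u' where "u' = u - t *\<^sub>R v'"
  define c' where "c' = c - t * d"
  have key: "\<And>i. u' \<bullet> x i - c' = (u \<bullet> x i - c) - t * (v' \<bullet> x i - d)"
    unfolding u'_def c'_def by (simp add: inner_diff_left algebra_simps)
  have u'0: "u' \<noteq> 0"
  proof
    assume "u' = 0"
    then have "u \<bullet> u' = 0" by simp
    moreover have "u \<bullet> u' = u \<bullet> u" unfolding u'_def using v'u by (simp add: inner_diff_right)
    ultimately show False using u0 by simp
  qed
  have supp: "\<forall>i<n. c' \<le> u' \<bullet> x i"
  proof (intro allI impI)
    fix i assume i: "i < n"
    show "c' \<le> u' \<bullet> x i"
    proof (cases "i \<in> J")
      case True
      then have pos: "v' \<bullet> x i - d > 0" unfolding J_def by simp
      have "t * (v' \<bullet> x i - d) \<le> r i * (v' \<bullet> x i - d)"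
        using tle[OF True] pos by (simp add: mult_right_mono)
      also have "\<dots> = u \<bullet> x i - c" unfolding r_def using pos by simp
      finally show ?thesis using key[of i] by simp
    next
      case False
      then have "v' \<bullet> x i - d \<le> 0" using i unfolding J_def by simp
      then have "t * (v' \<bullet> x i - d) \<le> 0" using tpos by (simp add: mult_nonneg_nonpos)
      moreover have "c \<le> u \<bullet> x i" using sup i by simp
      ultimately show ?thesis using key[of i] by linarith
    qed
  qed
  have sub: "insert j0 Z \<subseteq> {i. i < n \<and> u' \<bullet> x i = c'}"
  proof -
    have "u' \<bullet> x j0 - c' = 0"
      using key[of j0] j0 unfolding r_def J_def by simp
    moreover have "\<And>i. i \<in> Z \<Longrightarrow> u' \<bullet> x i - c' = 0" using key v'Z Zd by simp
    ultimately show ?thesis using Zd j0 unfolding J_def by auto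
  qed
  have "card Z < card (insert j0 Z)" using JZ[OF j0(1)] finZ by simp
  also have "\<dots> \<le> card {i. i < n \<and> u' \<bullet> x i = c'}" by (rule card_mono[OF _ sub]) simp
  finally show ?thesis using u'0 supp by blast
qed

lemma up_pt:
  fixes x :: "nat \<Rightarrow> real^'k"
  assumes gp: "gpI n x" and nk: "CARD('k) < n"
  shows "1 \<le> h \<Longrightarrow> h \<le> CARD('k) \<Longrightarrow> \<exists>u c. u \<noteq> 0 \<and> (\<forall>i<n. c \<le> u \<bullet> x i) \<and> h \<le> card {i. i < n \<and> u \<bullet> x i = c}"
proof (induction h)
  case 0 then show ?case by simp
next
  case (Suc h)
  show ?case
  proof (cases "h = 0")
    case True
    obtain u :: "real^'k" where u0: "u \<noteq> 0" using zero_neq_one by blast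
    define c where "c = Min ((\<lambda>i. u \<bullet> x i) ` {..<n})"
    have ne: "{..<n} \<noteq> {}" using nk by auto
    have "c \<in> (\<lambda>i. u \<bullet> x i) ` {..<n}" unfolding c_def using ne by simp
    then obtain i where i: "i < n" "c = u \<bullet> x i" by auto
    have "\<forall>i<n. c \<le> u \<bullet> x i" unfolding c_def by simp
    moreover have "1 \<le> card {i. i < n \<and> u \<bullet> x i = c}"
    proof -
      have "0 < card {i. i < n \<and> u \<bullet> x i = c}"
        by (rule card_gt_0_iff[THEN iffD2]) (use i in auto)
      then show ?thesis by simp
    qed
    ultimately show ?thesis using True u0 by auto
  next
    case False
    then obtain u c where H: "u \<noteq> 0" "\<forall>i<n. c \<le> u \<bullet> x i" "h \<le> card {i. i < n \<and> u \<bullet> x i = c}"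
      using Suc by auto
    show ?thesis
    proof (cases "Suc h \<le> card {i. i < n \<and> u \<bullet> x i = c}")
      case True then show ?thesis using H by blast
    next
      case F2: False
      then have "card {i. i < n \<and> u \<bullet> x i = c} = h" using H by simp
      then have "1 \<le> card {i. i < n \<and> u \<bullet> x i = c}" "card {i. i < n \<and> u \<bullet> x i = c} < CARD('k)"
        using False Suc.prems by auto
      from raise_pt[OF gp nk H(1) H(2) refl this] obtain u' c' where
        "u' \<noteq> 0" "\<forall>i<n. c' \<le> u' \<bullet> x i" "card {i. i < n \<and> u \<bullet> x i = c} < card {i. i < n \<and> u' \<bullet> x i = c'}"
        by blast
      then show ?thesis using \<open>card {i. i < n \<and> u \<bullet> x i = c} = h\<close> by (metis Suc_leI)
    qed
  qed
qed

lemma reach_pt: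
  fixes x :: "nat \<Rightarrow> real^'k"
  assumes gp: "gpI n x" and nk: "CARD('k) < n" and h1: "1 \<le> h"
  shows "u \<noteq> 0 \<Longrightarrow> (\<forall>i<n. c \<le> u \<bullet> x i) \<Longrightarrow> card {i. i < n \<and> u \<bullet> x i = c} = h + j \<Longrightarrow>
    \<exists>u c. u \<noteq> 0 \<and> (\<forall>i<n. c \<le> u \<bullet> x i) \<and> card {i. i < n \<and> u \<bullet> x i = c} = h"
proof (induction j arbitrary: u c)
  case 0 then show ?case by auto
next
  case (Suc j)
  let ?Z = "{i. i < n \<and> u \<bullet> x i = c}"
  have "?Z \<noteq> {}" using Suc.prems(3) by (metis card.empty nat.distinct(1) add_Suc_right)
  then obtain z where z: "z \<in> ?Z" by blast
  have "2 \<le> card ?Z" using Suc.prems(3) h1 by simp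
  then obtain u' c' where H: "u' \<noteq> 0" "\<forall>i<n. c' \<le> u' \<bullet> x i" "{i. i < n \<and> u' \<bullet> x i = c'} = ?Z - {z}"
    using drop_pt[OF gp nk Suc.prems(1) Suc.prems(2) refl _ z] by blast
  have "card {i. i < n \<and> u' \<bullet> x i = c'} = h + j" using H(3) z Suc.prems(3) by simp
  then show ?case using Suc.IH[OF H(1) H(2)] by blast
qed

lemma exact_pt:
  fixes x :: "nat \<Rightarrow> real^'k"
  assumes gp: "gpI n x" and nk: "CARD('k) < n" and h1: "1 \<le> h" and hk: "h \<le> CARD('k)"
  shows "\<exists>u c. u \<noteq> 0 \<and> (\<forall>i<n. c \<le> u \<bullet> x i) \<and> card {i. i < n \<and> u \<bullet> x i = c} = h"
proof -
  obtain u c where H: "u \<noteq> 0" "\<forall>i<n. c \<le> u \<bullet> x i" "h \<le> card {i. i < n \<and> u \<bullet> x i = c}"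
    using up_pt[OF gp nk h1 hk] by blast
  then obtain j where "card {i. i < n \<and> u \<bullet> x i = c} = h + j" using le_Suc_ex by blast
  then show ?thesis using reach_pt[OF gp nk h1 H(1) H(2)] by blast
qed



lemma size_filter_img:
  assumes "finite I"
  shows "size (filter_mset P (image_mset f (mset_set I))) = card {i\<in>I. P (f i)}"
  using assms by (simp add: filter_mset_image_mset)

lemma gp_conv:
  "general_position (image_mset f (mset_set {..<n})) \<longleftrightarrow> gpI n (f :: nat \<Rightarrow> real^'k)"
proof -
  have "\<And>P. {i\<in>{..<n}. P i} = {i. i < n \<and> P i}" by auto
  then show ?thesis unfolding general_position_def gpI_def
    by (simp add: filter_mset_image_mset)
qed

lemma rep_lemma:
  assumes "finite I" "S \<subseteq> I" "card S = m" "\<And>i. i \<in> I - S \<Longrightarrow> g i = f i"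
  shows "image_mset g (mset_set I) \<in> replacements (image_mset f (mset_set I)) m"
proof -
  have fS: "finite S" using assms(1,2) finite_subset by blast
  have I: "I = (I - S) \<union> S" using assms(2) by blast
  have split: "mset_set I = mset_set (I - S) + mset_set S"
    by (subst I, rule mset_set_Union) (use assms(1) fS in auto)
  have eq: "image_mset g (mset_set (I - S)) = image_mset f (mset_set (I - S))"
    by (rule image_mset_cong) (use assms(1) assms(4) in auto)
  define Y where "Y = image_mset f (mset_set S)"
  define Z where "Z = image_mset g (mset_set S)"
  have "image_mset f (mset_set I) = image_mset f (mset_set (I - S)) + Y"
    unfolding Y_def by (subst split) simp
  moreover have "image_mset g (mset_set I) = image_mset f (mset_set (I - S)) + Z"
    unfolding Z_def by (subst split) (simp add: eq)
  ultimately have "image_mset g (mset_set I) = image_mset f (mset_set I) - Y + Z"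
    by simp
  moreover have "Y \<subseteq># image_mset f (mset_set I)"
    using \<open>image_mset f (mset_set I) = image_mset f (mset_set (I - S)) + Y\<close> by simp
  moreover have "size Y = m" "size Z = m" unfolding Y_def Z_def using assms(3) by simp_all
  ultimately show ?thesis unfolding replacements_def by blast
qed

definition Sh :: "real \<Rightarrow> real^'k \<Rightarrow> real^'k \<Rightarrow> real^'k^'k" where
  "Sh l u w = mat 1 + (\<chi> i j. l * w$i * u$j)"

lemma Sh_apply: "Sh l u w *v p = p + (l * (u \<bullet> p)) *\<^sub>R (w::real^'k)"
proof -
  have "(\<chi> i j. l * w$i * u$j) *v p = (l * (u \<bullet> p)) *\<^sub>R w"
    by (simp add: vec_eq_iff matrix_vector_mult_def inner_vec_def sum_distrib_left algebra_simps)
  then show ?thesis unfolding Sh_def by (simp add: matrix_vector_mult_add_rdistrib)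
qed

lemma Sh_inv:
  fixes u w :: "real^'k"
  assumes "u \<bullet> w = 0"
  shows "invertible (Sh l u w)"
proof -
  have "Sh (- l) u w ** Sh l u w = mat 1"
  proof (subst matrix_eq, intro allI)
    fix p :: "real^'k"
    show "(Sh (- l) u w ** Sh l u w) *v p = mat 1 *v p"
      by (simp add: matrix_vector_mul_assoc[symmetric] Sh_apply inner_add_right assms algebra_simps)
  qed
  then show ?thesis unfolding invertible_left_inverse by blast
qed



lemma bad_finite:
  fixes x :: "nat \<Rightarrow> real^'k" and w :: "real^'k" and tt :: "nat \<Rightarrow> real"
  assumes gp: "gpI n x"
  shows "finite {l. \<not> gpI n (\<lambda>i. x i - (l * tt i) *\<^sub>R w)}"
proof -
  define y where "y = (\<lambda>l i. x i - (l * tt i) *\<^sub>R w)"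
  define Bad where "Bad = {l. \<not> gpI n (y l)}"
  define P where "P = (\<lambda>l S. \<exists>u' c'. u' \<noteq> 0 \<and> S = {i. i < n \<and> u' \<bullet> y l i = c'} \<and> CARD('k) < card S)"
  define F where "F = (\<lambda>l. SOME S. P l S)"
  have PF: "\<And>l. l \<in> Bad \<Longrightarrow> P l (F l)"
  proof -
    fix l assume "l \<in> Bad"
    then have "\<exists>S. P l S" unfolding Bad_def gpI_def P_def by (auto simp: not_le)
    then show "P l (F l)" unfolding F_def by (rule someI_ex)
  qed
  have inner_y: "\<And>v l i. v \<bullet> y l i = v \<bullet> x i - l * tt i * (v \<bullet> w)"
    unfolding y_def by (simp add: inner_diff_right)
  have "inj_on F Bad"
  proof (rule inj_onI, rule ccontr)
    fix l1 l2 assume l1: "l1 \<in> Bad" and l2: "l2 \<in> Bad" and eqF: "F l1 = F l2" and ne: "l1 \<noteq> l2"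
    define S where "S = F l1"
    obtain u1 c1 where h1: "u1 \<noteq> 0" "S = {i. i < n \<and> u1 \<bullet> y l1 i = c1}" "CARD('k) < card S"
      using PF[OF l1] unfolding P_def S_def by blast
    obtain u2 c2 where h2: "u2 \<noteq> 0" "S = {i. i < n \<and> u2 \<bullet> y l2 i = c2}"
      using PF[OF l2] unfolding P_def S_def eqF by blast
    have contra: "\<And>v c. v \<noteq> 0 \<Longrightarrow> (\<forall>i\<in>S. v \<bullet> x i = c) \<Longrightarrow> False"
    proof -
      fix v c assume v: "v \<noteq> (0::real^'k)" "\<forall>i\<in>S. v \<bullet> x i = c"
      have "S \<subseteq> {i. i < n \<and> v \<bullet> x i = c}" using v h1(2) by auto
      then have "card S \<le> card {i. i < n \<and> v \<bullet> x i = c}" by (rule card_mono[rotated]) simp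
      then show False using card_Z_le[OF gp v(1), of c] h1(3) by simp
    qed
    define s1 where "s1 = u1 \<bullet> w"
    define s2 where "s2 = u2 \<bullet> w"
    have e1: "\<forall>i\<in>S. u1 \<bullet> x i = c1 + l1 * tt i * s1" using h1(2) inner_y unfolding s1_def by auto
    have e2: "\<forall>i\<in>S. u2 \<bullet> x i = c2 + l2 * tt i * s2" using h2(2) inner_y unfolding s2_def by auto
    show False
    proof (cases "s1 = 0 \<or> s2 = 0")
      case True
      then show False
      proof
        assume "s1 = 0" then have "\<forall>i\<in>S. u1 \<bullet> x i = c1" using e1 by simp
        then show False using contra[OF h1(1)] by blast
      next
        assume "s2 = 0" then have "\<forall>i\<in>S. u2 \<bullet> x i = c2" using e2 by simp
        then show False using contra[OF h2(1)] by blast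
      qed
    next
      case False
      define u' where "u' = (l2 * s2) *\<^sub>R u1 - (l1 * s1) *\<^sub>R u2"
      define c' where "c' = l2 * s2 * c1 - l1 * s1 * c2"
      have "u' \<bullet> w = s1 * s2 * (l2 - l1)"
        unfolding u'_def s1_def s2_def by (simp add: inner_diff_left algebra_simps)
      then have "u' \<noteq> 0" using False ne by auto
      moreover have "\<forall>i\<in>S. u' \<bullet> x i = c'"
      proof
        fix i assume "i \<in> S"
        then show "u' \<bullet> x i = c'" using e1 e2 unfolding u'_def c'_def
          by (simp add: inner_diff_left algebra_simps)
      qed
      ultimately show False using contra by blast
    qed
  qed
  moreover have "F ` Bad \<subseteq> Pow {..<n}"
  proof
    fix S assume "S \<in> F ` Bad"
    then obtain l where "l \<in> Bad" "S = F l" by blast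
    then show "S \<in> Pow {..<n}" using PF unfolding P_def by auto
  qed
  ultimately have "finite Bad" by (rule inj_on_finite) simp
  then show ?thesis unfolding Bad_def y_def .
qed



theorem theorem1:
  fixes T :: "(real^'k) multiset \<Rightarrow> real^'k"
    and X :: "(real^'k) multiset"
    and n h :: nat
  assumes "CARD('k) \<ge> 2"
    and "n > CARD('k)"
    and "1 \<le> h" and "h \<le> CARD('k)"
    and "affine_equivariant n T"
    and "condition_C n h T"
    and "size X = n"
    and "general_position X"
  shows "fsbv T X \<le> real ((n - h + 1) div 2) / real n"
proof -
  note k2 = assms(1) and nk = assms(2) and h1 = assms(3) and hk = assms(4)
  obtain xs where xs: "mset xs = X" using ex_mset by blast
  have lxs: "length xs = n" using xs assms(7) by (metis size_mset)
  define x where "x = (\<lambda>i. xs ! i)"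
  have hX: "X = image_mset x (mset_set {..<n})"
  proof -
    have "xs = map (\<lambda>i. xs ! i) [0..<n]" using lxs map_nth[of xs] by simp
    then have "X = mset (map (\<lambda>i. xs ! i) [0..<n])" using xs by metis
    also have "\<dots> = image_mset x (mset_set {..<n})" unfolding x_def by (simp add: atLeast0LessThan)
    finally show ?thesis .
  qed
  have gpx: "gpI n x" using assms(8) hX gp_conv by metis
  obtain u c where uc: "u \<noteq> 0" "\<forall>i<n. c \<le> u \<bullet> x i" "card {i. i < n \<and> u \<bullet> x i = c} = h"
    using exact_pt[OF gpx nk h1 hk] by blast
  define Z where "Z = {i. i < n \<and> u \<bullet> x i = c}"
  have cZ: "card Z = h" using uc Z_def by simp
  have finZ: "finite Z" unfolding Z_def by simp
  define m where "m = (n - h + 1) div 2"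
  have m1: "1 \<le> m" "m \<le> n - h" "n - h - m \<le> m" "m - (n - h - m) \<le> h"
    using nk hk h1 unfolding m_def by auto
  define R where "R = {..<n} - Z"
  have cR: "card R = n - h" unfolding R_def using cZ by (subst card_Diff_subset) (auto simp: Z_def)
  obtain A where A: "A \<subseteq> R" "card A = m" "finite A"
    using obtain_subset_with_card_n[of m R] m1 cR by auto
  define B where "B = R - A"
  have cB: "card B = n - h - m" unfolding B_def using A cR by (subst card_Diff_subset) (auto simp: R_def)
  have "m - card B \<le> card Z" using cB cZ m1 by simp
  then obtain E where E: "E \<subseteq> Z" "card E = m - card B" "finite E"
    by (rule obtain_subset_with_card_n)
  have "card {u} < CARD('k)" using k2 by simp
  then obtain w :: "real^'k" where w0: "w \<noteq> 0" and wu: "\<And>e. e \<in> {u} \<Longrightarrow> w \<bullet> e = 0"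
    using hyper_exists[of "{u}"] by blast
  have uw: "u \<bullet> w = 0" using wu[of u] by (simp add: inner_commute)
  define tt where "tt = (\<lambda>i. if i \<in> B then u \<bullet> x i - c else 0)"
  define y where "y = (\<lambda>l i. x i - (l * tt i) *\<^sub>R w)"
  define g where "g = (\<lambda>l p. p + (l * (u \<bullet> p - c)) *\<^sub>R w)"
  have g_aff: "\<And>l p. g l p = Sh l u w *v p + (- (l * c)) *\<^sub>R w"
    unfolding g_def Sh_apply by (simp add: algebra_simps)
  have uy: "\<And>l i. u \<bullet> y l i = u \<bullet> x i" unfolding y_def using uw by (simp add: inner_diff_right)
  have gy: "\<And>l i. i \<notin> A \<Longrightarrow> i < n \<Longrightarrow> g l (y l i) = x i"
  proof -
    fix l i assume i: "i \<notin> A" "i < n"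
    show "g l (y l i) = x i"
    proof (cases "i \<in> B")
      case True
      then show ?thesis unfolding g_def uy using uy[of l i] unfolding y_def tt_def
        by (simp add: algebra_simps)
    next
      case False
      then have "i \<in> Z" using i unfolding B_def R_def by auto
      then show ?thesis using False unfolding g_def y_def tt_def Z_def by simp
    qed
  qed
  define X1 where "X1 = (\<lambda>l. image_mset (y l) (mset_set {..<n}))"
  define X2 where "X2 = (\<lambda>l. image_mset (g l) (X1 l))"
  have X2': "\<And>l. X2 l = image_mset (\<lambda>i. g l (y l i)) (mset_set {..<n})"
    unfolding X2_def X1_def by (simp add: multiset.map_comp comp_def)
  have rep1: "\<And>l. X1 l \<in> replacements X m"
  proof -
    fix l
    have "B \<inter> E = {}" using E unfolding B_def R_def by auto
    then have "card (B \<union> E) = m" using cB E m1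
      by (subst card_Un_disjoint) (auto simp: B_def R_def)
    moreover have "B \<union> E \<subseteq> {..<n}" using E unfolding B_def R_def Z_def by auto
    ultimately show "X1 l \<in> replacements X m" unfolding X1_def hX
      by (intro rep_lemma) (auto simp: y_def tt_def)
  qed
  have rep2: "\<And>l. X2 l \<in> replacements X m"
  proof -
    fix l
    have "A \<subseteq> {..<n}" using A unfolding R_def by auto
    then show "X2 l \<in> replacements X m" unfolding X2' hX
      by (intro rep_lemma) (use A gy in auto)
  qed
  obtain \<alpha> where apos: "\<forall>Y. \<alpha> Y > 0" and aC: "\<forall>X u c. size X = n \<longrightarrow> general_position X \<longrightarrow>
           (\<forall>x\<in>#X. c \<le> u \<bullet> x) \<longrightarrow> size (filter_mset (\<lambda>x. u \<bullet> x = c) X) = h \<longrightarrow>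
           u \<bullet> T X \<ge> c + \<alpha> (image_mset (\<lambda>x. u \<bullet> x) X)"
    using assms(6) unfolding condition_C_def by blast
  define a0 where "a0 = \<alpha> (image_mset (\<lambda>p. u \<bullet> p) X)"
  have a0pos: "a0 > 0" unfolding a0_def using apos by blast
  define Bad where "Bad = {l. \<not> gpI n (y l)}"
  have finBad: "finite Bad" unfolding Bad_def y_def using bad_finite[OF gpx] by blast
  have lowT: "\<And>l. l \<notin> Bad \<Longrightarrow> u \<bullet> T (X1 l) \<ge> c + a0"
  proof -
    fix l assume l: "l \<notin> Bad"
    have s: "size (X1 l) = n" unfolding X1_def by simp
    have g: "general_position (X1 l)" unfolding X1_def gp_conv using l Bad_def by simp
    have sup: "\<forall>p\<in>#X1 l. c \<le> u \<bullet> p" unfolding X1_def using uy uc(2) by auto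
    have "size (filter_mset (\<lambda>p. u \<bullet> p = c) (X1 l)) = card {i\<in>{..<n}. u \<bullet> y l i = c}"
      unfolding X1_def by (rule size_filter_img) simp
    also have "\<dots> = card Z" unfolding Z_def uy by (rule arg_cong[where f=card]) auto
    finally have f: "size (filter_mset (\<lambda>p. u \<bullet> p = c) (X1 l)) = h" using cZ by simp
    have proj: "image_mset (\<lambda>p. u \<bullet> p) (X1 l) = image_mset (\<lambda>p. u \<bullet> p) X"
      unfolding X1_def hX by (simp add: multiset.map_comp comp_def uy)
    show "u \<bullet> T (X1 l) \<ge> c + a0" using aC s g sup f proj unfolding a0_def by metis
  qed
  have diffT: "\<And>l. T (X2 l) - T (X1 l) = (l * (u \<bullet> T (X1 l) - c)) *\<^sub>R w"
  proof -
    fix l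
    have inv: "invertible (Sh l u w)" using Sh_inv uw by blast
    have s: "size (X1 l) = n" unfolding X1_def by simp
    have "X2 l = image_mset (\<lambda>p. Sh l u w *v p + (- (l * c)) *\<^sub>R w) (X1 l)"
      unfolding X2_def g_aff ..
    then have "T (X2 l) = Sh l u w *v T (X1 l) + (- (l * c)) *\<^sub>R w"
      using assms(5) inv s unfolding affine_equivariant_def by metis
    then have "T (X2 l) = g l (T (X1 l))" using g_aff by simp
    then show "T (X2 l) - T (X1 l) = (l * (u \<bullet> T (X1 l) - c)) *\<^sub>R w" unfolding g_def by simp
  qed
  have bd: "breaks_down T X m"
    unfolding breaks_down_def
  proof
    fix Bd :: real
    define L0 where "L0 = 2 * \<bar>Bd\<bar> / (a0 * norm w)"
    define l where "l = 1 + max L0 (Max (insert 0 Bad))"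
    have "0 \<le> Max (insert 0 Bad)" using finBad by simp
    then have lpos: "l > 0" unfolding l_def by linarith
    have lnot: "l \<notin> Bad"
    proof
      assume "l \<in> Bad"
      then have "l \<le> Max (insert 0 Bad)" using finBad by simp
      then show False unfolding l_def by simp
    qed
    have nw: "norm w > 0" using w0 by simp
    have "L0 < l" unfolding l_def by simp
    then have "2 * \<bar>Bd\<bar> < l * (a0 * norm w)" unfolding L0_def using a0pos nw
      by (simp add: divide_less_eq mult.commute)
    also have "l * (a0 * norm w) \<le> l * (u \<bullet> T (X1 l) - c) * norm w"
      using lowT[OF lnot] lpos nw by (simp add: mult_left_mono mult_right_mono)
    also have "\<dots> = norm (T (X2 l) - T (X1 l))"
      using diffT[of l] lowT[OF lnot] lpos a0pos by (simp add: abs_mult)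
    also have "\<dots> \<le> norm (T (X2 l) - T X) + norm (T (X1 l) - T X)"
      using norm_triangle_ineq4[of "T (X2 l) - T X" "T (X1 l) - T X"] by simp
    finally have "Bd < norm (T (X2 l) - T X) \<or> Bd < norm (T (X1 l) - T X)" by linarith
    then show "\<exists>X'\<in>replacements X m. Bd < norm (T X' - T X)" using rep1 rep2 by blast
  qed
  define Sset where "Sset = {real m' / real (size X) | m'. 1 \<le> m' \<and> m' \<le> size X \<and> breaks_down T X m'}"
  have "Sset \<subseteq> (\<lambda>m'. real m' / real (size X)) ` {..size X}" unfolding Sset_def by auto
  then have "finite Sset" using finite_subset by blast
  moreover have "real m / real n \<in> Sset" unfolding Sset_def using bd m1 assms(7) by auto
  ultimately have "Min Sset \<le> real m / real n" by simp
  then show ?thesis unfolding fsbv_def Sset_def[symmetric] m_def .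
qed

end
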